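(* Let $g_1,\dots,g_p:\mathbb{R}^n\to\mathbb{R}$ be convex and twice continuously differentiable, and let $\tau_{\mu_1},\dots,\tau_{\mu_p}>0$. Consider the system with state $\mu=(\mu_1,\dots,\mu_p)$, $\mu_i(0)\ge 0$, driven by a differentiable input $\tilde u(t)\in\mathbb{R}^n$: $$\tau_{\mu_i}\dot\mu_i=(g_i(\tilde u))^+_{\mu_i},\qquad (g_i(\tilde u))^+_{\mu_i}=\begin{cases} g_i(\tilde u) & \text{if } \mu_i>0 \text{ or } g_i(\tilde u)>0,\\ 0 & \text{otherwise},\end{cases}$$ $i=1,\dots,p$. Let $\mathcal P$ be the power set of $\{1,\dots,p\}$ and define the switching signal $\sigma:[0,\infty)\to\mathcal P$ by $\sigma(t)=\{i: \mu_i(t)=0 \text{ and } g_i(\tilde u(t))\le 0\}$, so that $\tau_{\mu_i}\dot\mu_i=g_i(\tilde u)$ for $i\notin\sigma(t)$ and $\tau_{\mu_i}\dot\mu_i=0$ for $i\in\sigma(t)$. For each $\sigma_q\in\mathcal P$ define the storage function $S_{\sigma_q}(\mu)=\frac12\sum_{i\notin\sigma_q}\tau_{\mu_i}\dot\mu_i^2$. Let $u_s=\dot{\tilde u}$ and $y_s=\dot{\tilde y}$, where $\tilde y=\sum_{i=1}^p\mu_i\nabla_{\tilde u}g_i(\tilde u)$. Then the switched system is passive with the multiple storage functions $S_{\sigma_q}$, input $u_s$ and output $y_s$ in the following sense: for each $\sigma_p\in\mathcal P$ and every pair of switching times $t_i<t_j$ such that $\sigma(t_i)=\sigma(t_j)=\sigma_p$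 and $\sigma(t_k)\neq\sigma_p$ for all switching times $t_k$ with $t_i<t_k<t_j$, $$S_{\sigma_p}(\mu(t_j))-S_{\sigma_p}(\mu(t_i))\le\int_{t_i}^{t_j}u_s^\top y_s\,dt.$$
   Context: The storage functions are evaluated along solutions, where $\dot\mu_i$ is given by the dynamics; switching times are the times at which $\sigma(t)$ changes value. *)

theory Defs
  imports "HOL-Analysis.Analysis"
begin

definition C2_fun :: "('a::euclidean_space \<Rightarrow> real) \<Rightarrow> bool" where
  "C2_fun f \<longleftrightarrow> (\<exists>(f' :: 'a \<Rightarrow> ('a \<Rightarrow>\<^sub>L real)) (f'' :: 'a \<Rightarrow> ('a \<Rightarrow>\<^sub>L ('a \<Rightarrow>\<^sub>L real))).
      (\<forall>x. (f has_derivative blinfun_apply (f' x)) (at x)) \<and>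
      (\<forall>x. (f' has_derivative blinfun_apply (f'' x)) (at x)) \<and>
      continuous_on UNIV f'')"

definition proj_plus :: "real \<Rightarrow> real \<Rightarrow> real" where
  "proj_plus gv m = (if m > 0 \<or> gv > 0 then gv else 0)"

definition switching_signal ::
  "nat \<Rightarrow> (nat \<Rightarrow> 'a \<Rightarrow> real) \<Rightarrow> (real \<Rightarrow> 'a) \<Rightarrow> (nat \<Rightarrow> real \<Rightarrow> real) \<Rightarrow> real \<Rightarrow> nat set" where
  "switching_signal p g u mu t = {i \<in> {1..p}. mu i t = 0 \<and> g i (u t) \<le> 0}"

definition switching_time :: "(real \<Rightarrow> 'b) \<Rightarrow> real \<Rightarrow> bool" where
  "switching_time sig t \<longleftrightarrow> t \<ge> 0 \<and> (\<forall>e>0. \<exists>s\<ge>0. \<bar>s - t\<bar> < e \<and> sig s \<noteq> sig t)"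

text \<open>Storage function S_{sigma_q} = 1/2 * sum_{i notin sigma_q} tau_i * mudot_i^2,
  where mudot is the vector of state derivatives given by the dynamics.\<close>
definition storage :: "nat \<Rightarrow> (nat \<Rightarrow> real) \<Rightarrow> nat set \<Rightarrow> (nat \<Rightarrow> real) \<Rightarrow> real" where
  "storage p tau sq mudot = (1/2) * (\<Sum>i\<in>{1..p} - sq. tau i * (mudot i)\<^sup>2)"

end

theory Submission
  imports Defs
begin

definition Rc :: "(real \<Rightarrow> real) \<Rightarrow> real \<Rightarrow> real \<Rightarrow> bool" where
  "Rc h D t \<longleftrightarrow> (\<forall>e>0. \<forall>\<^sub>F s in at_right t. h s - h t \<le> (D + e) * (s - t))"

definition Lc :: "(real \<Rightarrow> real) \<Rightarrow> real \<Rightarrow> real \<Rightarrow> bool" where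
  "Lc h D t \<longleftrightarrow> (\<forall>e>0. \<forall>\<^sub>F s in at_left t. h t - h s \<le> (D + e) * (t - s))"

lemma deriv_Rc:
  assumes "(h has_real_derivative D) (at_right t)"
  shows "Rc h D t"
  unfolding Rc_def
proof (intro allI impI)
  fix e :: real assume e: "e > 0"
  have "((\<lambda>y. (h y - h t) / (y - t)) \<longlongrightarrow> D) (at_right t)"
    using assms by (simp add: has_field_derivative_iff)
  then have "\<forall>\<^sub>F s in at_right t. (h s - h t) / (s - t) < D + e"
    using e by (intro order_tendstoD(2)) auto
  then show "\<forall>\<^sub>F s in at_right t. h s - h t \<le> (D + e) * (s - t)"
    using eventually_at_right_less[of t]
  proof eventually_elim
    case (elim s)
    then show ?case by (simp add: divide_less_eq)
  qed
qed

lemma deriv_Lc: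
  assumes "(h has_real_derivative D) (at_left t)"
  shows "Lc h D t"
  unfolding Lc_def
proof (intro allI impI)
  fix e :: real assume e: "e > 0"
  have "((\<lambda>y. (h y - h t) / (y - t)) \<longlongrightarrow> D) (at_left t)"
    using assms by (simp add: has_field_derivative_iff)
  then have "\<forall>\<^sub>F s in at_left t. (h s - h t) / (s - t) < D + e"
    using e by (intro order_tendstoD(2)) auto
  moreover have "\<forall>\<^sub>F s in at_left t. s < t"
    by (simp add: eventually_at_filter)
  ultimately show "\<forall>\<^sub>F s in at_left t. h t - h s \<le> (D + e) * (t - s)"
  proof eventually_elim
    case (elim s)
    then have "(h s - h t) / (s - t) = (h t - h s) / (t - s)" by (simp add: field_simps)
    with elim show ?case by (simp add: divide_less_eq)
  qed
qed

lemma Rc_cong: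
  assumes "Rc h D t" "\<forall>\<^sub>F s in at_right t. k s = h s" "k t = h t"
  shows "Rc k D t"
  unfolding Rc_def
proof (intro allI impI)
  fix e :: real assume "e > 0"
  with assms(1) have "\<forall>\<^sub>F s in at_right t. h s - h t \<le> (D + e) * (s - t)"
    by (auto simp: Rc_def)
  with assms(2) show "\<forall>\<^sub>F s in at_right t. k s - k t \<le> (D + e) * (s - t)"
    by eventually_elim (use assms(3) in simp)
qed

lemma Lc_cong:
  assumes "Lc h D t" "\<forall>\<^sub>F s in at_left t. k s = h s" "k t = h t"
  shows "Lc k D t"
  unfolding Lc_def
proof (intro allI impI)
  fix e :: real assume "e > 0"
  with assms(1) have "\<forall>\<^sub>F s in at_left t. h t - h s \<le> (D + e) * (t - s)"
    by (auto simp: Lc_def)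
  with assms(2) show "\<forall>\<^sub>F s in at_left t. k t - k s \<le> (D + e) * (t - s)"
    by eventually_elim (use assms(3) in simp)
qed

lemma Rc_sum:
  assumes "finite I" "\<And>i. i \<in> I \<Longrightarrow> Rc (h i) (D i) t"
    and "(\<Sum>i\<in>I. D i) \<le> F"
  shows "Rc (\<lambda>s. \<Sum>i\<in>I. h i s) F t"
  unfolding Rc_def
proof (intro allI impI)
  fix e :: real assume e: "e > 0"
  define e' where "e' = e / (real (card I) + 1)"
  have e': "e' > 0" using e by (simp add: e'_def)
  have ce: "real (card I) * e' \<le> e"
    using e by (simp add: e'_def field_simps)
  have "\<forall>\<^sub>F s in at_right t. \<forall>i\<in>I. h i s - h i t \<le> (D i + e') * (s - t)"
    using assms(1,2) e' by (auto simp: Rc_def intro!: eventually_ball_finite)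
  then show "\<forall>\<^sub>F s in at_right t. (\<Sum>i\<in>I. h i s) - (\<Sum>i\<in>I. h i t) \<le> (F + e) * (s - t)"
    using eventually_at_right_less[of t]
  proof eventually_elim
    case (elim s)
    have "(\<Sum>i\<in>I. h i s) - (\<Sum>i\<in>I. h i t) = (\<Sum>i\<in>I. h i s - h i t)"
      by (simp add: sum_subtractf)
    also have "\<dots> \<le> (\<Sum>i\<in>I. (D i + e') * (s - t))"
      using elim by (intro sum_mono) auto
    also have "\<dots> = ((\<Sum>i\<in>I. D i) + real (card I) * e') * (s - t)"
      by (subst sum_distrib_right[symmetric]) (simp add: sum.distrib)
    also have "\<dots> \<le> (F + e) * (s - t)"
      using elim(2) ce assms(3) by (intro mult_right_mono) auto
    finally show ?case .
  qed
qed

lemma Lc_sum: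
  assumes "finite I" "\<And>i. i \<in> I \<Longrightarrow> Lc (h i) (D i) t"
    and "(\<Sum>i\<in>I. D i) \<le> F"
  shows "Lc (\<lambda>s. \<Sum>i\<in>I. h i s) F t"
  unfolding Lc_def
proof (intro allI impI)
  fix e :: real assume e: "e > 0"
  define e' where "e' = e / (real (card I) + 1)"
  have e': "e' > 0" using e by (simp add: e'_def)
  have ce: "real (card I) * e' \<le> e"
    using e by (simp add: e'_def field_simps)
  have "\<forall>\<^sub>F s in at_left t. \<forall>i\<in>I. h i t - h i s \<le> (D i + e') * (t - s)"
    using assms(1,2) e' by (auto simp: Lc_def intro!: eventually_ball_finite)
  moreover have "\<forall>\<^sub>F s in at_left t. s < t"
    by (simp add: eventually_at_filter)
  ultimately show "\<forall>\<^sub>F s in at_left t. (\<Sum>i\<in>I. h i t) - (\<Sum>i\<in>I. h i s) \<le> (F + e) * (t - s)"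
  proof eventually_elim
    case (elim s)
    have "(\<Sum>i\<in>I. h i t) - (\<Sum>i\<in>I. h i s) = (\<Sum>i\<in>I. h i t - h i s)"
      by (simp add: sum_subtractf)
    also have "\<dots> \<le> (\<Sum>i\<in>I. (D i + e') * (t - s))"
      using elim by (intro sum_mono) auto
    also have "\<dots> = ((\<Sum>i\<in>I. D i) + real (card I) * e') * (t - s)"
      by (subst sum_distrib_right[symmetric]) (simp add: sum.distrib)
    also have "\<dots> \<le> (F + e) * (t - s)"
      using elim(2) ce assms(3) by (intro mult_right_mono) auto
    finally show ?case .
  qed
qed


lemma key_ineq:
  fixes G f :: "real \<Rightarrow> real"
  assumes ab: "a \<le> b" and int: "f integrable_on {a..b}"
    and R: "\<And>t. t \<in> {a..<b} \<Longrightarrow> Rc G (f t) t"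
    and L: "\<And>t. t \<in> {a<..b} \<Longrightarrow> Lc G (f t) t"
  shows "G b - G a \<le> integral {a..b} f"
proof -
  define I where "I = integral {a..b} f"
  have hasI: "(f has_integral I) {a..b}" using int by (simp add: I_def integrable_integral)
  have main: "G b - G a \<le> I + e * (1 + (b - a))" if e: "e > 0" for e
  proof -
    obtain \<gamma> where g: "gauge \<gamma>" and gI: "\<And>\<D>. \<D> tagged_division_of {a..b} \<and> \<gamma> fine \<D> \<Longrightarrow>
        norm (sum (\<lambda>(x,k). Henstock_Kurzweil_Integration.content(k) *\<^sub>R f x) \<D> - I) < e"
      using hasI e unfolding has_integral_real by meson
    have "\<forall>t. \<exists>d>0. (t \<in> {a..<b} \<longrightarrow> (\<forall>s. t < s \<and> s < t + d \<longrightarrow> G s - G t \<le> (f t + e) * (s - t)))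
        \<and> (t \<in> {a<..b} \<longrightarrow> (\<forall>s. t - d < s \<and> s < t \<longrightarrow> G t - G s \<le> (f t + e) * (t - s)))"
    proof
      fix t
      obtain d1 where d1: "d1 > 0" "t \<in> {a..<b} \<longrightarrow> (\<forall>s. t < s \<and> s < t + d1 \<longrightarrow> G s - G t \<le> (f t + e) * (s - t))"
      proof (cases "t \<in> {a..<b}")
        case True
        then have "\<forall>\<^sub>F s in at_right t. G s - G t \<le> (f t + e) * (s - t)"
          using R e by (auto simp: Rc_def)
        then obtain c where "c > t" "\<forall>s>t. s < c \<longrightarrow> G s - G t \<le> (f t + e) * (s - t)"
          by (auto simp: eventually_at_right_field)
        then show ?thesis using that[of "c - t"] by auto
      next
        case False then show ?thesis using that[of 1] by auto
      qed
      obtain d2 where d2: "d2 > 0" "t \<in> {a<..b} \<longrightarrow> (\<forall>s. t - d2 < s \<and> s < t \<longrightarrow> G t - G s \<le> (f t + e) * (t - s))"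
      proof (cases "t \<in> {a<..b}")
        case True
        then have "\<forall>\<^sub>F s in at_left t. G t - G s \<le> (f t + e) * (t - s)"
          using L e by (auto simp: Lc_def)
        then obtain c where "c < t" "\<forall>s>c. s < t \<longrightarrow> G t - G s \<le> (f t + e) * (t - s)"
          by (auto simp: eventually_at_left_field)
        then show ?thesis using that[of "t - c"] by auto
      next
        case False then show ?thesis using that[of 1] by auto
      qed
      show "\<exists>d>0. (t \<in> {a..<b} \<longrightarrow> (\<forall>s. t < s \<and> s < t + d \<longrightarrow> G s - G t \<le> (f t + e) * (s - t)))
        \<and> (t \<in> {a<..b} \<longrightarrow> (\<forall>s. t - d < s \<and> s < t \<longrightarrow> G t - G s \<le> (f t + e) * (t - s)))"
        using d1 d2 by (intro exI[of _ "min d1 d2"]) auto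
    qed
    then obtain d where d: "\<And>t. d t > 0"
      "\<And>t s. t \<in> {a..<b} \<Longrightarrow> t < s \<Longrightarrow> s < t + d t \<Longrightarrow> G s - G t \<le> (f t + e) * (s - t)"
      "\<And>t s. t \<in> {a<..b} \<Longrightarrow> t - d t < s \<Longrightarrow> s < t \<Longrightarrow> G t - G s \<le> (f t + e) * (t - s)"
      by metis
    have gb: "gauge (\<lambda>t. ball t (d t))" using d(1) by (simp add: gauge_ball_dependent)
    obtain \<D> where D: "\<D> tagged_division_of {a..b}" "(\<lambda>t. \<gamma> t \<inter> ball t (d t)) fine \<D>"
      using fine_division_exists_real[OF gauge_Int[OF g gb]] by blast
    have Dg: "\<gamma> fine \<D>" and Db: "(\<lambda>t. ball t (d t)) fine \<D>"
      using D(2) by (auto simp: fine_Int)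
    have trm: "G (Sup K) - G (Inf K) \<le> Henstock_Kurzweil_Integration.content K * f x + e * Henstock_Kurzweil_Integration.content K" if xK: "(x, K) \<in> \<D>" for x K
    proof -
      obtain c d' where K: "K = cbox c d'" "x \<in> K" "K \<subseteq> {a..b}" "K \<noteq> {}"
        using tagged_division_ofD(2,3,4)[OF D(1) xK] tagged_division_ofD(2)[OF D(1) xK]
        by (metis box_real(2) empty_iff)
      then have cd: "c \<le> x" "x \<le> d'" "c \<le> d'" "a \<le> c" "d' \<le> b" by auto
      have Kb: "K \<subseteq> ball x (d x)" using Db xK by (auto simp: fine_def)
      have "c \<in> K" "d' \<in> K" using cd K by auto
      then have dd: "x - d x < c" "d' < x + d x" using Kb by (auto simp: dist_real_def)
      have sK: "Sup K = d'" "Inf K = c" "Henstock_Kurzweil_Integration.content K = d' - c" using K cd by auto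
      have r: "G d' - G x \<le> (f x + e) * (d' - x)"
      proof (cases "x < d'")
        case True
        then show ?thesis using d(2)[of x d'] cd dd by auto
      qed (use cd in auto)
      have l: "G x - G c \<le> (f x + e) * (x - c)"
      proof (cases "c < x")
        case True
        then show ?thesis using d(3)[of x c] cd dd by auto
      qed (use cd in auto)
      have "G (Sup K) - G (Inf K) = (G d' - G x) + (G x - G c)" using sK by simp
      also have "\<dots> \<le> (f x + e) * (d' - x) + (f x + e) * (x - c)" using r l by simp
      also have "\<dots> = Henstock_Kurzweil_Integration.content K * f x + e * Henstock_Kurzweil_Integration.content K" unfolding sK(3) by (simp add: algebra_simps)
      finally show ?thesis .
    qed
    have "G b - G a = (\<Sum>(x,K)\<in>\<D>. G (Sup K) - G (Inf K))"
      using additive_tagged_division_1[OF ab D(1), of G] by simp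
    also have "\<dots> \<le> (\<Sum>(x,K)\<in>\<D>. Henstock_Kurzweil_Integration.content K * f x + e * Henstock_Kurzweil_Integration.content K)"
      using trm by (intro sum_mono) auto
    also have "\<dots> = (\<Sum>(x,K)\<in>\<D>. Henstock_Kurzweil_Integration.content K *\<^sub>R f x) + e * (\<Sum>(x,K)\<in>\<D>. Henstock_Kurzweil_Integration.content K)"
      by (simp add: sum.distrib sum_distrib_left case_prod_unfold)
    also have "(\<Sum>(x,K)\<in>\<D>. Henstock_Kurzweil_Integration.content K) = b - a"
      using additive_content_tagged_division[of \<D> a b] D(1) ab by (simp add: box_real)
    also have "(\<Sum>(x,K)\<in>\<D>. Henstock_Kurzweil_Integration.content K *\<^sub>R f x) \<le> I + e"
      using gI[of \<D>] D(1) Dg by (auto simp: abs_less_iff)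
    finally show ?thesis using e by (simp add: algebra_simps)
  qed
  show ?thesis
  proof (rule ccontr)
    assume "\<not> ?thesis"
    then have pos: "G b - G a - I > 0" by (simp add: I_def)
    define e where "e = (G b - G a - I) / (2 * (1 + (b - a)))"
    have e: "e > 0" using pos ab by (simp add: e_def)
    have eq: "e * (1 + (b - a)) = (G b - G a - I) / 2" using ab by (simp add: e_def field_simps)
    have "G b - G a \<le> I + (G b - G a - I) / 2" using main[OF e] unfolding eq .
    then show False using pos by argo
  qed
qed

lemma rmono:
  fixes h :: "real \<Rightarrow> real"
  assumes ab: "a \<le> b" and cont: "continuous_on {a..b} h"
    and der: "\<And>x. x \<in> {a..<b} \<Longrightarrow> \<exists>D. (h has_real_derivative D) (at_right x) \<and> D \<le> 0"
  shows "h b \<le> h a"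
proof -
  have main: "h b \<le> h a + e * (b - a)" if e: "e > 0" for e
  proof -
    define T where "T = {x\<in>{a..b}. \<forall>y\<in>{a..x}. h y \<le> h a + e * (y - a)}"
    define c where "c = Sup T"
    have aT: "a \<in> T" using ab by (auto simp: T_def)
    have bdd: "bdd_above T" by (auto simp: T_def bdd_above_def)
    have ac: "a \<le> c" using aT bdd by (simp add: c_def cSup_upper)
    have cb: "c \<le> b" using aT by (auto simp: c_def T_def intro!: cSup_least)
    have below: "h y \<le> h a + e * (y - a)" if ay: "a \<le> y" and yc: "y < c" for y
    proof -
      obtain x where "x \<in> T" "y < x" using less_cSupD[of T y] aT yc unfolding c_def by blast
      then show ?thesis using ay by (auto simp: T_def)
    qed
    have hc: "h c \<le> h a + e * (c - a)"
    proof (cases "a = c")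
      case False
      then have ac': "a < c" using ac by simp
      have "(h \<longlongrightarrow> h c) (at c within {a..c})"
        using cont ac cb by (intro continuous_on_subset[THEN continuous_on_def[THEN iffD1, rule_format]])
          (auto)
      then have lim: "(h \<longlongrightarrow> h c) (at_left c)" using at_within_Icc_at_left[OF ac'] by simp
      have lim2: "((\<lambda>y. h a + e * (y - a)) \<longlongrightarrow> h a + e * (c - a)) (at_left c)"
        by (intro tendsto_intros)
      have ev: "\<forall>\<^sub>F y in at_left c. h y \<le> h a + e * (y - a)"
        using ac' by (auto simp: eventually_at_left_field intro!: exI[of _ a] below)
      show ?thesis by (rule tendsto_le[OF _ lim2 lim ev]) simp
    qed simp
    have cT: "c \<in> T" using ac cb below hc by (force simp: T_def)
    have "c = b"
    proof (rule ccontr)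
      assume "c \<noteq> b"
      then have cb': "c < b" using cb by simp
      obtain D where D: "(h has_real_derivative D) (at_right c)" "D \<le> 0" using der cb' ac by auto
      have "\<forall>\<^sub>F s in at_right c. h s - h c \<le> (D + e) * (s - c)"
        using deriv_Rc[OF D(1)] e by (auto simp: Rc_def)
      then obtain r where r: "r > c" "\<And>s. s > c \<Longrightarrow> s < r \<Longrightarrow> h s - h c \<le> (D + e) * (s - c)"
        by (auto simp: eventually_at_right_field)
      define s where "s = min ((c + r) / 2) b"
      have s: "c < s" "s < r" "s \<le> b" using r cb' by (auto simp: s_def min_def)
      have "s \<in> T"
        unfolding T_def
      proof (intro CollectI conjI ballI)
        show "s \<in> {a..b}" using s ac by auto
        fix y assume y: "y \<in> {a..s}"
        show "h y \<le> h a + e * (y - a)"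
        proof (cases "y \<le> c")
          case True
          then show ?thesis using cT y by (auto simp: T_def)
        next
          case False
          then have "h y - h c \<le> (D + e) * (y - c)" using r(2)[of y] s y by auto
          also have "\<dots> \<le> e * (y - c)" using D(2) False by (intro mult_right_mono) auto
          finally show ?thesis using hc by (simp add: algebra_simps)
        qed
      qed
      then have "s \<le> c" using bdd by (simp add: c_def cSup_upper)
      then show False using s by simp
    qed
    then show ?thesis using cT by (auto simp: T_def)
  qed
  show ?thesis
  proof (rule ccontr)
    assume "\<not> ?thesis"
    then have pos: "h b - h a > 0" by simp
    define e where "e = (h b - h a) / (2 * (1 + (b - a)))"
    have e: "e > 0" using pos ab by (simp add: e_def)
    have "e * (b - a) \<le> e * (1 + (b - a))" using e by simp
    also have "e * (1 + (b - a)) = (h b - h a) / 2" using ab by (simp add: e_def field_simps)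
    finally show False using main[OF e] pos by argo
  qed
qed


lemma convex_tangent:
  fixes g :: "'a::euclidean_space \<Rightarrow> real"
  assumes cvx: "convex_on UNIV g" and gd: "GDERIV g x :> D"
  shows "g y - g x \<ge> (y - x) \<bullet> D"
proof -
  define \<phi> where "\<phi> t = g (x + t *\<^sub>R (y - x))" for t :: real
  have l: "((\<lambda>t::real. x + t *\<^sub>R (y - x)) has_derivative (\<lambda>t. t *\<^sub>R (y - x))) (at 0)"
    by (auto intro!: derivative_eq_intros)
  have gd': "(g has_derivative (\<lambda>h. h \<bullet> D)) (at (x + 0 *\<^sub>R (y - x)))"
    using gd by (simp add: gderiv_def)
  have "((\<lambda>t. g (x + t *\<^sub>R (y - x))) has_derivative (\<lambda>t. (t *\<^sub>R (y - x)) \<bullet> D)) (at 0)"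
    by (rule has_derivative_compose[OF l gd'])
  then have "(\<phi> has_field_derivative ((y - x) \<bullet> D)) (at 0)"
    unfolding has_field_derivative_def \<phi>_def
    by (rule has_derivative_eq_rhs) (auto simp: fun_eq_iff)
  then have lim: "((\<lambda>t. (\<phi> t - \<phi> 0) / (t - 0)) \<longlongrightarrow> (y - x) \<bullet> D) (at_right 0)"
    by (simp add: has_field_derivative_iff filterlim_at_split)
  have ev: "\<forall>\<^sub>F t in at_right 0. (\<phi> t - \<phi> 0) / (t - 0) \<le> g y - g x"
  proof -
    have "\<forall>\<^sub>F t in at_right (0::real). 0 < t \<and> t < 1"
      by (auto simp: eventually_at_right_field intro!: exI[of _ 1])
    then show ?thesis
    proof eventually_elim
      case (elim t)
      have "g ((1 - t) *\<^sub>R x + t *\<^sub>R y) \<le> (1 - t) * g x + t * g y"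
        using elim cvx by (intro convex_onD) auto
      moreover have "(1 - t) *\<^sub>R x + t *\<^sub>R y = x + t *\<^sub>R (y - x)"
        by (simp add: algebra_simps)
      ultimately have "\<phi> t - \<phi> 0 \<le> t * (g y - g x)"
        by (simp add: \<phi>_def algebra_simps)
      then show ?case using elim by (simp add: divide_le_eq mult.commute)
    qed
  qed
  show ?thesis
    by (rule tendsto_upperbound[OF lim ev]) simp
qed

lemma grad_mono:
  fixes g :: "'a::euclidean_space \<Rightarrow> real"
  assumes cvx: "convex_on UNIV g" and gd: "\<And>x. GDERIV g x :> D x"
  shows "(D x - D y) \<bullet> (x - y) \<ge> 0"
proof -
  have "g y - g x \<ge> (y - x) \<bullet> D x" by (rule convex_tangent[OF cvx gd])
  moreover have "g x - g y \<ge> (x - y) \<bullet> D y" by (rule convex_tangent[OF cvx gd])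
  ultimately have "0 \<le> (x - y) \<bullet> D x - (x - y) \<bullet> D y" by (simp add: inner_diff_left) 
  then show ?thesis by (simp add: inner_diff_left inner_diff_right inner_commute)
qed

lemma C2_grad_differentiable:
  fixes g :: "'a::euclidean_space \<Rightarrow> real"
  assumes C2: "C2_fun g" and gd: "\<And>x. GDERIV g x :> D x"
  shows "D differentiable (at x)"
proof -
  obtain f' :: "'a \<Rightarrow> ('a \<Rightarrow>\<^sub>L real)" and f'' where
    f': "\<And>x. (g has_derivative blinfun_apply (f' x)) (at x)" and
    f'': "\<And>x. (f' has_derivative blinfun_apply (f'' x)) (at x)"
    using C2 unfolding C2_fun_def by blast
  have eq: "blinfun_apply (f' y) = (\<lambda>h. h \<bullet> D y)" for y
    using has_derivative_unique[OF f'[of y]] gd[of y] by (simp add: gderiv_def)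
  have Deq: "D = (\<lambda>y. \<Sum>b\<in>Basis. blinfun_apply (f' y) b *\<^sub>R b)"
  proof
    fix y
    show "D y = (\<Sum>b\<in>Basis. blinfun_apply (f' y) b *\<^sub>R b)"
    proof -
      have "(\<Sum>b\<in>Basis. (b \<bullet> D y) *\<^sub>R b) = (\<Sum>b\<in>Basis. (D y \<bullet> b) *\<^sub>R b)"
        by (simp add: inner_commute)
      then show ?thesis unfolding eq by (simp add: euclidean_representation)
    qed
  qed
  have "(\<lambda>y. \<Sum>b\<in>Basis. blinfun_apply (f' y) b *\<^sub>R b) differentiable (at x)"
    unfolding differentiable_def
  proof (rule exI, rule has_derivative_sum)
    fix b :: 'a assume "b \<in> Basis"
    have "((\<lambda>y. blinfun_apply (f' y) b) has_derivative (\<lambda>v. blinfun_apply (f'' x v) b)) (at x)"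
      by (rule bounded_linear.has_derivative[OF blinfun.bounded_linear_left f''])
    then show "((\<lambda>y. blinfun_apply (f' y) b *\<^sub>R b) has_derivative (\<lambda>v. blinfun_apply (f'' x v) b *\<^sub>R b)) (at x)"
      by (rule has_derivative_scaleR_left)
  qed
  then show ?thesis using Deq by simp
qed

lemma vd_quot:
  fixes f :: "real \<Rightarrow> 'b::real_normed_vector"
  assumes "(f has_vector_derivative f') (at_right t)"
  shows "((\<lambda>s. (1 / (s - t)) *\<^sub>R (f s - f t)) \<longlongrightarrow> f') (at_right t)"
proof -
  have "((\<lambda>y. (1 / norm (y - t)) *\<^sub>R (f y - (f t + (y - t) *\<^sub>R f'))) \<longlongrightarrow> 0) (at_right t)"
    using assms unfolding has_vector_derivative_def has_derivative_within by blast
  then have "((\<lambda>y. (1 / norm (y - t)) *\<^sub>R (f y - (f t + (y - t) *\<^sub>R f')) + f') \<longlongrightarrow> 0 + f') (at_right t)"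
    by (intro tendsto_intros)
  then have lim: "((\<lambda>y. (1 / norm (y - t)) *\<^sub>R (f y - (f t + (y - t) *\<^sub>R f')) + f') \<longlongrightarrow> f') (at_right t)"
    by simp
  show ?thesis
  proof (rule Lim_transform_eventually[OF lim])
    show "\<forall>\<^sub>F y in at_right t. (1 / norm (y - t)) *\<^sub>R (f y - (f t + (y - t) *\<^sub>R f')) + f' =
        (1 / (y - t)) *\<^sub>R (f y - f t)"
      using eventually_at_right_less[of t]
    proof eventually_elim
      case (elim y)
      then have "norm (y - t) = y - t" by simp
      have yy: "y / (y - t) = 1 + t / (y - t)" using elim by (simp add: field_simps)
      show ?case using elim \<open>norm (y - t) = y - t\<close>
        by (simp add: scaleR_diff_right algebra_simps yy scaleR_add_left)
    qed
  qed
qed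

lemma rnonpos:
  fixes h :: "real \<Rightarrow> real"
  assumes ab: "a \<le> b" and cont: "continuous_on {a..b} h" and ha: "h a \<le> 0"
    and der: "\<And>x. x \<in> {a..<b} \<Longrightarrow> h x \<ge> 0 \<Longrightarrow> \<exists>D. (h has_real_derivative D) (at_right x) \<and> D \<le> 0"
  shows "h b \<le> 0"
proof (rule ccontr)
  assume "\<not> h b \<le> 0"
  then have hb: "h b > 0" by simp
  define S where "S = {a..b} \<inter> h -` {..0}"
  have cl: "closed S" unfolding S_def
    by (rule continuous_closed_preimage[OF cont]) auto
  have aS: "a \<in> S" using ab ha by (auto simp: S_def)
  have bdd: "bdd_above S" by (auto simp: S_def bdd_above_def)
  define c where "c = Sup S"
  have cS: "c \<in> S" unfolding c_def using closed_contains_Sup[OF _ bdd cl] aS by auto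
  then have c: "a \<le> c" "c \<le> b" "h c \<le> 0" by (auto simp: S_def)
  have cb: "c < b" using c hb by (cases "c = b") auto
  have pos: "h s > 0" if "c < s" "s \<le> b" for s
  proof (rule ccontr)
    assume "\<not> h s > 0"
    then have "s \<in> S" using that c by (auto simp: S_def)
    then have "s \<le> c" using bdd by (simp add: c_def cSup_upper)
    then show False using that by simp
  qed
  have "(h \<longlongrightarrow> h c) (at c within {c..b})"
    using cont c by (intro continuous_on_subset[THEN continuous_on_def[THEN iffD1, rule_format]]) auto
  then have lim: "(h \<longlongrightarrow> h c) (at_right c)" using at_within_Icc_at_right[OF cb] by simp
  have "\<forall>\<^sub>F s in at_right c. 0 \<le> h s"
    using cb by (auto simp: eventually_at_right_field intro!: exI[of _ b] less_imp_le pos)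
  then have hc0: "h c \<ge> 0" by (rule tendsto_lowerbound[OF lim]) simp
  have "h b \<le> h c"
  proof (rule rmono[of c b h])
    show "c \<le> b" by fact
    show "continuous_on {c..b} h" using cont c by (auto intro: continuous_on_subset)
    fix x assume x: "x \<in> {c..<b}"
    have "h x \<ge> 0" using x hc0 pos[of x] by (cases "x = c") auto
    then show "\<exists>D. (h has_real_derivative D) (at_right x) \<and> D \<le> 0"
      using der[of x] x c by auto
  qed
  then show False using hb c by simp
qed


lemma mono_deriv:
  fixes u q :: "real \<Rightarrow> 'a::real_inner"
  assumes du: "(u has_vector_derivative v) (at_right t)"
    and dq: "(q has_vector_derivative w) (at_right t)"
    and m: "\<And>s. (q s - q t) \<bullet> (u s - u t) \<ge> 0"
  shows "w \<bullet> v \<ge> 0"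
proof -
  have lim: "((\<lambda>s. ((1/(s-t)) *\<^sub>R (q s - q t)) \<bullet> ((1/(s-t)) *\<^sub>R (u s - u t))) \<longlongrightarrow> w \<bullet> v) (at_right t)"
    by (intro tendsto_inner vd_quot du dq)
  have "0 \<le> ((1/(s-t)) *\<^sub>R (q s - q t)) \<bullet> ((1/(s-t)) *\<^sub>R (u s - u t))" for s
  proof -
    have "((1/(s-t)) *\<^sub>R (q s - q t)) \<bullet> ((1/(s-t)) *\<^sub>R (u s - u t))
        = (1/(s-t))^2 * ((q s - q t) \<bullet> (u s - u t))"
      by (simp add: power2_eq_square)
    then show ?thesis using m[of s] by simp
  qed
  then have "\<forall>\<^sub>F s in at_right t. 0 \<le> ((1/(s-t)) *\<^sub>R (q s - q t)) \<bullet> ((1/(s-t)) *\<^sub>R (u s - u t))"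
    by simp
  then show ?thesis by (rule tendsto_lowerbound[OF lim]) simp
qed

lemma within_Rc:
  assumes "t \<ge> 0" "(h has_real_derivative D) (at t within {0..})"
  shows "Rc h D t"
proof -
  have "(h has_real_derivative D) (at t within {t<..})"
    by (rule DERIV_subset[OF assms(2)]) (use assms(1) in auto)
  then show ?thesis by (rule deriv_Rc)
qed

lemma within_at:
  assumes "(t::real) > 0"
  shows "at t within {0..} = at t"
  using assms by (intro at_within_interior) simp

lemma within_Lc:
  assumes "t > 0" "(h has_real_derivative D) (at t within {0..})"
  shows "Lc h D t"
proof -
  have "(h has_real_derivative D) (at t)" using assms within_at by metis
  then have "(h has_real_derivative D) (at t within {..<t})"
    by (rule DERIV_subset) auto
  then show ?thesis by (rule deriv_Lc)
qed

lemma ev_right: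
  assumes "(t::real) \<ge> 0" "eventually P (at t within {0..})"
  shows "eventually P (at_right t)"
  by (rule filter_leD[OF at_le assms(2)]) (use assms in auto)

lemma ev_left:
  assumes "(t::real) > 0" "eventually P (at t within {0..})"
  shows "eventually P (at_left t)"
proof -
  have "eventually P (at t)" using assms within_at by metis
  then show ?thesis by (rule filter_leD[OF at_le, rotated]) auto
qed

lemma Rc_le:
  assumes "Rc h D t" "\<And>s. k s - k t \<le> h s - h t"
  shows "Rc k D t"
  unfolding Rc_def
proof (intro allI impI)
  fix e :: real assume "e > 0"
  with assms(1) have "\<forall>\<^sub>F s in at_right t. h s - h t \<le> (D + e) * (s - t)"
    by (auto simp: Rc_def)
  then show "\<forall>\<^sub>F s in at_right t. k s - k t \<le> (D + e) * (s - t)"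
    by eventually_elim (use assms(2) order_trans in blast)
qed

theorem proposition2:
  fixes p :: nat
    and g :: "nat \<Rightarrow> 'a::euclidean_space \<Rightarrow> real"
    and Dg :: "nat \<Rightarrow> 'a \<Rightarrow> 'a"
    and tau :: "nat \<Rightarrow> real"
    and u :: "real \<Rightarrow> 'a"
    and us :: "real \<Rightarrow> 'a"
    and mu :: "nat \<Rightarrow> real \<Rightarrow> real"
    and ys :: "real \<Rightarrow> 'a"
    and sp :: "nat set"
    and ti tj :: real
  assumes convex: "\<And>i. i \<in> {1..p} \<Longrightarrow> convex_on UNIV (g i)"
    and C2: "\<And>i. i \<in> {1..p} \<Longrightarrow> C2_fun (g i)"
    and grad: "\<And>i x. i \<in> {1..p} \<Longrightarrow> GDERIV (g i) x :> Dg i x"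
    and tau_pos: "\<And>i. i \<in> {1..p} \<Longrightarrow> tau i > 0"
    and inp: "\<And>t. t \<ge> 0 \<Longrightarrow> (u has_vector_derivative us t) (at t within {0..})"
    and init: "\<And>i. i \<in> {1..p} \<Longrightarrow> mu i 0 \<ge> 0"
    and cont: "\<And>i. i \<in> {1..p} \<Longrightarrow> continuous_on {0..} (mu i)"
    and dyn: "\<And>i t. i \<in> {1..p} \<Longrightarrow> t \<ge> 0 \<Longrightarrow>
        (mu i has_real_derivative proj_plus (g i (u t)) (mu i t) / tau i) (at_right t)"
    and outp: "\<And>t. t \<ge> 0 \<Longrightarrow>
        ((\<lambda>s. \<Sum>i\<in>{1..p}. mu i s *\<^sub>R Dg i (u s)) has_vector_derivative ys t) (at_right t)"
    and ti_sw: "switching_time (switching_signal p g u mu) ti"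
    and tj_sw: "switching_time (switching_signal p g u mu) tj"
    and tij: "ti < tj"
    and sig_ti: "switching_signal p g u mu ti = sp"
    and sig_tj: "switching_signal p g u mu tj = sp"
    and between: "\<And>tk. switching_time (switching_signal p g u mu) tk \<Longrightarrow> ti < tk \<Longrightarrow> tk < tj \<Longrightarrow>
        switching_signal p g u mu tk \<noteq> sp"
    and integrable: "(\<lambda>t. us t \<bullet> ys t) integrable_on {ti..tj}"
  shows "storage p tau sp (\<lambda>i. proj_plus (g i (u tj)) (mu i tj) / tau i)
         - storage p tau sp (\<lambda>i. proj_plus (g i (u ti)) (mu i ti) / tau i)
         \<le> integral {ti..tj} (\<lambda>t. us t \<bullet> ys t)"
proof -
  have ti0: "ti \<ge> 0" using ti_sw by (simp add: switching_time_def)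
  define P where "P i s = proj_plus (g i (u s)) (mu i s)" for i s
  define F where "F i s = (P i s)\<^sup>2 / (2 * tau i)" for i s
  define H where "H i s = (g i (u s))\<^sup>2 / (2 * tau i)" for i s
  define \<phi> where "\<phi> i t = P i t * (us t \<bullet> Dg i (u t)) / tau i" for i t
  define G where "G s = (\<Sum>i\<in>{1..p}. F i s)" for s
  have gder: "((\<lambda>s. g i (u s)) has_real_derivative (us t \<bullet> Dg i (u t))) (at t within {0..})"
    if i: "i \<in> {1..p}" and t: "t \<ge> 0" for i t
  proof -
    have du: "(u has_derivative (\<lambda>h. h *\<^sub>R us t)) (at t within {0..})"
      using inp[OF t] by (simp add: has_vector_derivative_def)
    have dg: "(g i has_derivative (\<lambda>h. h \<bullet> Dg i (u t))) (at (u t))"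
      using grad[OF i] by (simp add: gderiv_def)
    show ?thesis
      unfolding has_field_derivative_def
      by (rule has_derivative_eq_rhs[OF has_derivative_compose[OF du dg]])
        (auto simp: fun_eq_iff)
  qed
  have Hder: "(H i has_real_derivative (g i (u t) * (us t \<bullet> Dg i (u t)) / tau i)) (at t within {0..})"
    if i: "i \<in> {1..p}" and t: "t \<ge> 0" for i t
  proof -
    have "tau i > 0" using tau_pos[OF i] .
    then show ?thesis
      unfolding H_def
      using gder[OF i t] by (auto intro!: derivative_eq_intros simp: field_simps power2_eq_square)
  qed
  have Pge: "P i s \<ge> 0" if "mu i s \<le> 0" for i s
    using that by (auto simp: P_def proj_plus_def)
  have mu_nn: "mu i t \<ge> 0" if i: "i \<in> {1..p}" and t: "t \<ge> 0" for i t
  proof -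
    have "(\<lambda>s. - mu i s) t \<le> 0"
    proof (rule rnonpos[of 0 t])
      show "0 \<le> t" by fact
      show "continuous_on {0..t} (\<lambda>s. - mu i s)"
        using cont[OF i] by (auto intro!: continuous_intros intro: continuous_on_subset)
      show "- mu i 0 \<le> 0" using init[OF i] by simp
      fix x assume x: "x \<in> {0..<t}" "- mu i x \<ge> 0"
      have "((\<lambda>s. - mu i s) has_real_derivative - (P i x / tau i)) (at_right x)"
        using dyn[OF i, of x] x unfolding P_def by (auto intro!: derivative_intros)
      moreover have "- (P i x / tau i) \<le> 0" using Pge[of i x] x tau_pos[OF i] by simp
      ultimately show "\<exists>D. ((\<lambda>s. - mu i s) has_real_derivative D) (at_right x) \<and> D \<le> 0" by blast
    qed
    then show ?thesis by simp
  qed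
  have Fnn: "F i s \<ge> 0" if "i \<in> {1..p}" for i s
    using tau_pos[OF that] by (simp add: F_def)
  have stepC: "(\<Sum>i\<in>{1..p}. \<phi> i t) \<le> us t \<bullet> ys t" if t: "t \<ge> 0" for t
  proof -
    define q' where "q' i = vector_derivative (\<lambda>s. Dg i (u s)) (at t within {0..})" for i
    have dq: "((\<lambda>s. Dg i (u s)) has_vector_derivative q' i) (at t within {0..})"
      if i: "i \<in> {1..p}" for i
    proof -
      have "u differentiable (at t within {0..})"
        using inp[OF t] by (rule differentiableI_vector)
      moreover have "Dg i differentiable (at (u t) within (u ` {0..}))"
        by (rule differentiable_at_withinI[OF C2_grad_differentiable[OF C2[OF i] grad[OF i]]])
      ultimately have "(Dg i \<circ> u) differentiable (at t within {0..})"
        by (rule differentiable_chain_within)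
      then have "((Dg i \<circ> u) has_vector_derivative vector_derivative (Dg i \<circ> u) (at t within {0..})) (at t within {0..})"
        by (rule vector_derivative_works[THEN iffD1])
      then show ?thesis unfolding q'_def o_def .
    qed
    have dqr: "((\<lambda>s. Dg i (u s)) has_vector_derivative q' i) (at_right t)" if i: "i \<in> {1..p}" for i
      by (rule has_vector_derivative_within_subset[OF dq[OF i]]) (use t in auto)
    have dur: "(u has_vector_derivative us t) (at_right t)"
      by (rule has_vector_derivative_within_subset[OF inp[OF t]]) (use t in auto)
    have dY: "((\<lambda>s. \<Sum>i\<in>{1..p}. mu i s *\<^sub>R Dg i (u s)) has_vector_derivative
        (\<Sum>i\<in>{1..p}. mu i t *\<^sub>R q' i + (P i t / tau i) *\<^sub>R Dg i (u t))) (at_right t)"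
      unfolding P_def
      by (intro has_vector_derivative_sum has_vector_derivative_scaleR dyn dqr t) auto
    have ys_eq: "ys t = (\<Sum>i\<in>{1..p}. mu i t *\<^sub>R q' i + (P i t / tau i) *\<^sub>R Dg i (u t))"
      by (rule vector_derivative_unique_within[OF _ outp[OF t] dY]) simp
    have m: "0 \<le> q' i \<bullet> us t" if i: "i \<in> {1..p}" for i
    proof (rule mono_deriv[OF dur dqr[OF i]])
      fix s
      show "0 \<le> (Dg i (u s) - Dg i (u t)) \<bullet> (u s - u t)"
        by (rule grad_mono[OF convex[OF i] grad[OF i]])
    qed
    have "us t \<bullet> ys t = (\<Sum>i\<in>{1..p}. mu i t * (us t \<bullet> q' i) + \<phi> i t)"
      unfolding ys_eq \<phi>_def by (simp add: inner_sum_right inner_add_right)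
    also have "\<dots> \<ge> (\<Sum>i\<in>{1..p}. \<phi> i t)"
    proof (rule sum_mono)
      fix i assume i: "i \<in> {1..p}"
      have "0 \<le> mu i t * (us t \<bullet> q' i)"
        using mu_nn[OF i t] m[OF i] by (simp add: inner_commute)
      then show "\<phi> i t \<le> mu i t * (us t \<bullet> q' i) + \<phi> i t" by simp
    qed
    finally show ?thesis .
  qed
  have ctrl: "Rc (F i) (\<phi> i t) t \<and> (t > 0 \<longrightarrow> Lc (F i) (\<phi> i t) t)"
    if i: "i \<in> {1..p}" and t: "t \<ge> 0" for i t
  proof (cases "mu i t > 0 \<or> g i (u t) > 0")
    case act: True
    have ev: "\<forall>\<^sub>F s in at t within {0..}. mu i s > 0 \<or> g i (u s) > 0"
    proof (cases "mu i t > 0")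
      case True
      have "(mu i \<longlongrightarrow> mu i t) (at t within {0..})"
        using cont[OF i] t by (simp add: continuous_on_def)
      then have "\<forall>\<^sub>F s in at t within {0..}. mu i s > 0" using True by (rule order_tendstoD(1))
      then show ?thesis by eventually_elim simp
    next
      case False
      then have gp: "g i (u t) > 0" using act by simp
      have "((\<lambda>s. g i (u s)) \<longlongrightarrow> g i (u t)) (at t within {0..})"
        using DERIV_continuous[OF gder[OF i t]] by (simp add: continuous_within)
      then have "\<forall>\<^sub>F s in at t within {0..}. g i (u s) > 0" using gp by (rule order_tendstoD(1))
      then show ?thesis by eventually_elim simp
    qed
    have evF: "\<forall>\<^sub>F s in at t within {0..}. F i s = H i s"
      using ev by eventually_elim (auto simp: F_def H_def P_def proj_plus_def)
    have Ft: "F i t = H i t" using act by (auto simp: F_def H_def P_def proj_plus_def)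
    have phi: "\<phi> i t = g i (u t) * (us t \<bullet> Dg i (u t)) / tau i"
      using act by (auto simp: \<phi>_def P_def proj_plus_def)
    show ?thesis
    proof
      show "Rc (F i) (\<phi> i t) t"
        using Rc_cong[OF within_Rc[OF t Hder[OF i t]] ev_right[OF t evF] Ft] phi by simp
      show "t > 0 \<longrightarrow> Lc (F i) (\<phi> i t) t"
      proof
        assume tp: "t > 0"
        show "Lc (F i) (\<phi> i t) t"
          using Lc_cong[OF within_Lc[OF tp Hder[OF i t]] ev_left[OF tp evF] Ft] phi by simp
      qed
    qed
  next
    case False
    then have mu0: "mu i t = 0" and g0: "g i (u t) \<le> 0" using mu_nn[OF i t] by auto
    have P0: "P i t = 0" using mu0 g0 by (simp add: P_def proj_plus_def)
    have F0: "F i t = 0" by (simp add: F_def P0)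
    have phi0: "\<phi> i t = 0" by (simp add: \<phi>_def P0)
    have L: "Lc (F i) (\<phi> i t) t"
      unfolding Lc_def
    proof (intro allI impI)
      fix e :: real assume e: "e > 0"
      have "\<forall>\<^sub>F s in at_left t. s < t" by (simp add: eventually_at_filter)
      then show "\<forall>\<^sub>F s in at_left t. F i t - F i s \<le> (\<phi> i t + e) * (t - s)"
      proof eventually_elim
        case (elim s)
        have "0 \<le> e * (t - s)" using elim e by simp
        then show ?case using Fnn[OF i, of s] by (simp add: F0 phi0)
      qed
    qed
    have R: "Rc (F i) (\<phi> i t) t"
    proof (cases "g i (u t) = 0")
      case True
      have "Rc (H i) 0 t" using within_Rc[OF t Hder[OF i t]] True by simp
      then have "Rc (F i) 0 t"
      proof (rule Rc_le)
        fix s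
        have "(P i s)\<^sup>2 \<le> (g i (u s))\<^sup>2" by (auto simp: P_def proj_plus_def)
        then have "F i s \<le> H i s" using tau_pos[OF i] unfolding F_def H_def
          by (intro divide_right_mono) auto
        then show "F i s - F i t \<le> H i s - H i t" using True F0 by (simp add: H_def)
      qed
      then show ?thesis by (simp add: phi0)
    next
      case False
      then have gneg: "g i (u t) < 0" using g0 by simp
      have "((\<lambda>s. g i (u s)) \<longlongrightarrow> g i (u t)) (at t within {0..})"
        using DERIV_continuous[OF gder[OF i t]] by (simp add: continuous_within)
      then have "\<forall>\<^sub>F s in at t within {0..}. g i (u s) < 0" using gneg by (rule order_tendstoD(2))
      then have "\<forall>\<^sub>F s in at_right t. g i (u s) < 0" by (rule ev_right[OF t])
      then obtain r where r: "r > t" "\<And>s. s > t \<Longrightarrow> s < r \<Longrightarrow> g i (u s) < 0"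
        by (auto simp: eventually_at_right_field)
      have Fz: "F i s = 0" if s: "t < s" "s < r" for s
      proof -
        have "mu i s \<le> mu i t"
        proof (rule rmono[of t s "mu i"])
          show "t \<le> s" using s by simp
          show "continuous_on {t..s} (mu i)" using cont[OF i] t by (auto intro: continuous_on_subset)
          fix x assume x: "x \<in> {t..<s}"
          have gx: "g i (u x) < 0" using x r s gneg by (cases "x = t") auto
          have "(mu i has_real_derivative P i x / tau i) (at_right x)"
            using dyn[OF i, of x] x t unfolding P_def by auto
          moreover have "P i x / tau i \<le> 0" using gx tau_pos[OF i]
            by (auto simp: P_def proj_plus_def divide_nonpos_pos)
          ultimately show "\<exists>D. (mu i has_real_derivative D) (at_right x) \<and> D \<le> 0" by blast
        qed
        then have "mu i s = 0" using mu_nn[OF i, of s] mu0 s t by auto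
        then have "P i s = 0" using r(2)[OF s] by (simp add: P_def proj_plus_def)
        then show ?thesis by (simp add: F_def)
      qed
      have evF: "\<forall>\<^sub>F s in at_right t. F i s = (\<lambda>_. 0) s"
        using r by (auto simp: eventually_at_right_field intro!: exI[of _ r] Fz)
      have "Rc (\<lambda>_. 0) 0 t" by (rule deriv_Rc) (rule DERIV_const)
      then have "Rc (F i) 0 t" by (rule Rc_cong[OF _ evF]) (simp add: F0)
      then show ?thesis by (simp add: phi0)
    qed
    show ?thesis using L R by simp
  qed
  have RG: "Rc G (us t \<bullet> ys t) t" if t: "t \<in> {ti..<tj}" for t
    unfolding G_def
    by (rule Rc_sum[of "{1..p}" F "\<lambda>i. \<phi> i t"]) (use ctrl stepC ti0 t in auto)
  have LG: "Lc G (us t \<bullet> ys t) t" if t: "t \<in> {ti<..tj}" for t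
    unfolding G_def
    by (rule Lc_sum[of "{1..p}" F "\<lambda>i. \<phi> i t"]) (use ctrl stepC ti0 t in auto)
  have key: "G tj - G ti \<le> integral {ti..tj} (\<lambda>t. us t \<bullet> ys t)"
    by (rule key_ineq[OF _ integrable RG LG]) (use tij in auto)
  have st: "storage p tau sp (\<lambda>i. proj_plus (g i (u t)) (mu i t) / tau i) = G t"
    if sg: "switching_signal p g u mu t = sp" for t
  proof -
    have "storage p tau sp (\<lambda>i. proj_plus (g i (u t)) (mu i t) / tau i)
        = (1/2) * (\<Sum>i\<in>{1..p} - sp. tau i * (P i t / tau i)\<^sup>2)"
      by (simp add: storage_def P_def)
    also have "\<dots> = (\<Sum>i\<in>{1..p} - sp. F i t)"
      unfolding sum_distrib_left
    proof (rule sum.cong)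
      fix i assume "i \<in> {1..p} - sp"
      then have "tau i > 0" using tau_pos by auto
      then show "1 / 2 * (tau i * (P i t / tau i)\<^sup>2) = F i t"
        by (simp add: F_def power2_eq_square field_simps)
    qed simp
    also have "\<dots> = G t"
      unfolding G_def
    proof (rule sum.mono_neutral_right[symmetric])
      show "finite {1..p}" by simp
      show "{1..p} - sp \<subseteq> {1..p}" by auto
      show "\<forall>i\<in>{1..p} - ({1..p} - sp). F i t = 0"
      proof
        fix i assume "i \<in> {1..p} - ({1..p} - sp)"
        then have "i \<in> switching_signal p g u mu t" using sg by auto
        then have "mu i t = 0" "g i (u t) \<le> 0" by (auto simp: switching_signal_def)
        then show "F i t = 0" by (simp add: F_def P_def proj_plus_def)
      qed
    qed
    finally show ?thesis .
  qed
  show ?thesis using st[OF sig_tj] st[OF sig_ti] key by simp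
qed

end
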